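(* Let $0<\delta\le 1$. The mechanism $\mathcal{SA}_\delta$ admits a pure Nash equilibrium for every collection $A$, it is anonymous, and it is $\delta$-Pareto efficient in all equilibria, i.e., for every collection $A$ every pure Nash equilibrium outcome $x$ of $\Gamma_{\mathcal{SA}_\delta}(A)$ is $\delta$-Pareto efficient.
   Context: Two players bargain over a collection (multiset) of $n$ alternatives $A=(a^k)_{k\in[n]}$, $a^k\in[0,1]^2$, $a^k_i$ being player $i$'s utility. A mechanism is a sequence $(M_n)_n$, $M_n$ consisting of signal sets $\Sigma_1(n),\Sigma_2(n)$ and a map $f_n:\Sigma_1(n)\times\Sigma_2(n)\to\Delta([n])$; with risk-neutral players it induces a game $\Gamma_M(A)$ whose payoffs are expected utilities, and the outcome of a profile is its expected utility vector. A mechanism is anonymous if $\Sigma_1(n)=\Sigma_2(n)$ and $f_n(\sigma_1,\sigma_2)=f_n(\sigma_2,\sigma_1)$ for all $n,\sigma_1,\sigma_2$. The mechanism $\mathcal{SA}_\delta$: each player submits $L_i\subseteq[n]$; the index is drawn from $UN([n])$ if $L_1=L_2=\emptyset$; from $UN(L_1\cup L_2)$ if $L_1\cap L_2=\emptyset\ne L_1\cup L_2$; and from $(1-\delta)UN(L_1\cap L_2)+\delta\,UN(L_1\cup L_2)$ if $L_1\cap L_2\ne\emptyset$ ($UN$ = uniform distribution). An allocation $x\in[0,1]^2$ is $\varepsilon$-Pareto efficient (w.r.t. $A$) if there is no $a\in A$ with $a_1>x_1+\varepsilon$ and $a_2>x_2+\varepsilon$. *)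

theory Defs
  imports "HOL-Analysis.Analysis"
begin

(* Indices [n] are rendered as {..<n} = {0,...,n-1}.
   A collection A = (a^k)_{k in [n]} is a function a :: nat => real * real,
   a k = (a^k_1, a^k_2), with values in [0,1]^2 on [n]. *)

definition is_collection :: "nat \<Rightarrow> (nat \<Rightarrow> real \<times> real) \<Rightarrow> bool" where
  "is_collection n a \<longleftrightarrow> (\<forall>k<n. fst (a k) \<in> {0..1} \<and> snd (a k) \<in> {0..1})"

definition is_distribution :: "nat \<Rightarrow> (nat \<Rightarrow> real) \<Rightarrow> bool" where
  "is_distribution n p \<longleftrightarrow> (\<forall>k. p k \<ge> 0) \<and> (\<forall>k. k \<ge> n \<longrightarrow> p k = 0) \<and> (\<Sum>k<n. p k) = 1"

definition is_mechanism ::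
  "(nat \<Rightarrow> 's1 set) \<Rightarrow> (nat \<Rightarrow> 's2 set) \<Rightarrow> (nat \<Rightarrow> 's1 \<Rightarrow> 's2 \<Rightarrow> nat \<Rightarrow> real) \<Rightarrow> bool" where
  "is_mechanism Sig1 Sig2 f \<longleftrightarrow>
     (\<forall>n \<ge> 1. \<forall>s1 \<in> Sig1 n. \<forall>s2 \<in> Sig2 n. is_distribution n (f n s1 s2))"

definition anonymous ::
  "(nat \<Rightarrow> 's set) \<Rightarrow> (nat \<Rightarrow> 's set) \<Rightarrow> (nat \<Rightarrow> 's \<Rightarrow> 's \<Rightarrow> nat \<Rightarrow> real) \<Rightarrow> bool" where
  "anonymous Sig1 Sig2 f \<longleftrightarrow>
     (\<forall>n. Sig1 n = Sig2 n) \<and> (\<forall>n s1 s2. f n s1 s2 = f n s2 s1)"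

definition payoff1 :: "(nat \<Rightarrow> 's1 \<Rightarrow> 's2 \<Rightarrow> nat \<Rightarrow> real) \<Rightarrow> nat \<Rightarrow> (nat \<Rightarrow> real \<times> real) \<Rightarrow> 's1 \<Rightarrow> 's2 \<Rightarrow> real" where
  "payoff1 f n a s1 s2 = (\<Sum>k<n. f n s1 s2 k * fst (a k))"

definition payoff2 :: "(nat \<Rightarrow> 's1 \<Rightarrow> 's2 \<Rightarrow> nat \<Rightarrow> real) \<Rightarrow> nat \<Rightarrow> (nat \<Rightarrow> real \<times> real) \<Rightarrow> 's1 \<Rightarrow> 's2 \<Rightarrow> real" where
  "payoff2 f n a s1 s2 = (\<Sum>k<n. f n s1 s2 k * snd (a k))"

definition outcome :: "(nat \<Rightarrow> 's1 \<Rightarrow> 's2 \<Rightarrow> nat \<Rightarrow> real) \<Rightarrow> nat \<Rightarrow> (nat \<Rightarrow> real \<times> real) \<Rightarrow> 's1 \<Rightarrow> 's2 \<Rightarrow> real \<times> real" where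
  "outcome f n a s1 s2 = (payoff1 f n a s1 s2, payoff2 f n a s1 s2)"

definition pure_NE ::
  "(nat \<Rightarrow> 's1 set) \<Rightarrow> (nat \<Rightarrow> 's2 set) \<Rightarrow> (nat \<Rightarrow> 's1 \<Rightarrow> 's2 \<Rightarrow> nat \<Rightarrow> real) \<Rightarrow> nat \<Rightarrow> (nat \<Rightarrow> real \<times> real) \<Rightarrow> 's1 \<Rightarrow> 's2 \<Rightarrow> bool" where
  "pure_NE Sig1 Sig2 f n a s1 s2 \<longleftrightarrow>
     s1 \<in> Sig1 n \<and> s2 \<in> Sig2 n \<and>
     (\<forall>t1 \<in> Sig1 n. payoff1 f n a t1 s2 \<le> payoff1 f n a s1 s2) \<and>
     (\<forall>t2 \<in> Sig2 n. payoff2 f n a s1 t2 \<le> payoff2 f n a s1 s2)"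

definition eps_pareto_efficient :: "real \<Rightarrow> nat \<Rightarrow> (nat \<Rightarrow> real \<times> real) \<Rightarrow> real \<times> real \<Rightarrow> bool" where
  "eps_pareto_efficient \<epsilon> n a x \<longleftrightarrow>
     \<not> (\<exists>k<n. fst (a k) > fst x + \<epsilon> \<and> snd (a k) > snd x + \<epsilon>)"

definition UN_dist :: "nat set \<Rightarrow> nat \<Rightarrow> real" where
  "UN_dist S k = (if k \<in> S then 1 / real (card S) else 0)"

definition SA_Sig :: "nat \<Rightarrow> nat set set" where
  "SA_Sig n = Pow {..<n}"

definition SA_f :: "real \<Rightarrow> nat \<Rightarrow> nat set \<Rightarrow> nat set \<Rightarrow> nat \<Rightarrow> real" where
  "SA_f \<delta> n L1 L2 =
     (if L1 = {} \<and> L2 = {} then UN_dist {..<n}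
      else if L1 \<inter> L2 = {} then UN_dist (L1 \<union> L2)
      else (\<lambda>k. (1 - \<delta>) * UN_dist (L1 \<inter> L2) k + \<delta> * UN_dist (L1 \<union> L2) k))"

end

theory Submission
  imports Defs
begin

definition avg :: "nat set \<Rightarrow> (nat \<Rightarrow> real) \<Rightarrow> real" where
  "avg S g = sum g S / real (card S)"

lemma sum_UN:
  assumes "S \<subseteq> {..<n}"
  shows "(\<Sum>k<n. UN_dist S k * g k) = avg S g"
proof -
  have "(\<Sum>k<n. UN_dist S k * g k) = (\<Sum>k\<in>{..<n}. if k \<in> S then g k / real (card S) else 0)"
    by (rule sum.cong) (auto simp: UN_dist_def)
  also have "\<dots> = (\<Sum>k\<in>{..<n} \<inter> S. g k / real (card S))"
    by (simp add: sum.inter_restrict)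
  also have "{..<n} \<inter> S = S" using assms by auto
  also have "(\<Sum>k\<in>S. g k / real (card S)) = avg S g"
    by (simp add: avg_def sum_divide_distrib)
  finally show ?thesis .
qed

lemma UN_sum1:
  assumes "S \<subseteq> {..<n}" "S \<noteq> {}"
  shows "(\<Sum>k<n. UN_dist S k) = 1"
proof -
  have "finite S" using assms(1) finite_subset by blast
  then have "card S > 0" using assms(2) by (simp add: card_gt_0_iff)
  have "(\<Sum>k<n. UN_dist S k) = (\<Sum>k<n. UN_dist S k * (\<lambda>_. 1) k)" by simp
  also have "\<dots> = avg S (\<lambda>_. 1)" by (rule sum_UN[OF assms(1)])
  also have "\<dots> = 1" using \<open>card S > 0\<close> by (simp add: avg_def)
  finally show ?thesis .
qed

lemma pay1:
  assumes "L1 \<subseteq> {..<n}" "L2 \<subseteq> {..<n}"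
  shows "payoff1 (SA_f \<delta>) n a L1 L2 =
    (if L1 = {} \<and> L2 = {} then avg {..<n} (\<lambda>k. fst (a k))
     else if L1 \<inter> L2 = {} then avg (L1 \<union> L2) (\<lambda>k. fst (a k))
     else (1 - \<delta>) * avg (L1 \<inter> L2) (\<lambda>k. fst (a k)) + \<delta> * avg (L1 \<union> L2) (\<lambda>k. fst (a k)))"
proof -
  have u: "L1 \<union> L2 \<subseteq> {..<n}" and i: "L1 \<inter> L2 \<subseteq> {..<n}" using assms by auto
  have e: "(\<Sum>k<n. ((1 - \<delta>) * UN_dist (L1 \<inter> L2) k + \<delta> * UN_dist (L1 \<union> L2) k) * fst (a k))
     = (1 - \<delta>) * (\<Sum>k<n. UN_dist (L1 \<inter> L2) k * fst (a k)) + \<delta> * (\<Sum>k<n. UN_dist (L1 \<union> L2) k * fst (a k))"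
    by (simp add: distrib_right sum.distrib sum_distrib_left mult.assoc)
  show ?thesis
  proof (cases "L1 = {} \<and> L2 = {}")
    case True
    show ?thesis unfolding payoff1_def SA_f_def if_P[OF True] using sum_UN[of "{..<n}" n] by simp
  next
    case F: False
    show ?thesis
    proof (cases "L1 \<inter> L2 = {}")
      case True
      show ?thesis unfolding payoff1_def SA_f_def if_not_P[OF F] if_P[OF True] using sum_UN[OF u] by simp
    next
      case False
      show ?thesis unfolding payoff1_def SA_f_def if_not_P[OF F] if_not_P[OF False] using e sum_UN[OF u] sum_UN[OF i] by simp
    qed
  qed
qed

lemma SA_f_sym: "SA_f \<delta> n L1 L2 = SA_f \<delta> n L2 L1"
  unfolding SA_f_def by (simp add: Int_commute Un_commute conj_commute)

lemma pay2_swap: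
  "payoff2 (SA_f \<delta>) n a L1 L2 = payoff1 (SA_f \<delta>) n (\<lambda>k. prod.swap (a k)) L2 L1"
  unfolding payoff1_def payoff2_def by (simp add: SA_f_sym)

lemma pay1_swap:
  "payoff1 (SA_f \<delta>) n a L1 L2 = payoff2 (SA_f \<delta>) n (\<lambda>k. prod.swap (a k)) L2 L1"
  unfolding payoff1_def payoff2_def by (simp add: SA_f_sym)

lemma NE_swap:
  assumes "pure_NE SA_Sig SA_Sig (SA_f \<delta>) n a L1 L2"
  shows "pure_NE SA_Sig SA_Sig (SA_f \<delta>) n (\<lambda>k. prod.swap (a k)) L2 L1"
proof -
  have e1: "\<And>X Y. payoff1 (SA_f \<delta>) n a X Y = payoff2 (SA_f \<delta>) n (\<lambda>k. prod.swap (a k)) Y X"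
    by (rule pay1_swap)
  have e2: "\<And>X Y. payoff2 (SA_f \<delta>) n a X Y = payoff1 (SA_f \<delta>) n (\<lambda>k. prod.swap (a k)) Y X"
    by (rule pay2_swap)
  show ?thesis using assms unfolding pure_NE_def e1 e2 by auto
qed

lemma avg_le_iff:
  assumes "finite X" "X \<noteq> {}"
  shows "avg X g \<le> v \<longleftrightarrow> (\<Sum>j\<in>X. g j - v) \<le> 0"
proof -
  have c: "real (card X) > 0" using assms by (simp add: card_gt_0_iff)
  have "(\<Sum>j\<in>X. g j - v) = sum g X - real (card X) * v"
    by (simp add: sum_subtractf)
  then show ?thesis using c unfolding avg_def by (simp add: pos_divide_le_eq mult.commute)
qed

lemma avg_ge_iff:
  assumes "finite X" "X \<noteq> {}"
  shows "v \<le> avg X g \<longleftrightarrow> 0 \<le> (\<Sum>j\<in>X. g j - v)"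
proof -
  have c: "real (card X) > 0" using assms by (simp add: card_gt_0_iff)
  have "(\<Sum>j\<in>X. g j - v) = sum g X - real (card X) * v"
    by (simp add: sum_subtractf)
  then show ?thesis using c unfolding avg_def by (simp add: pos_le_divide_eq mult.commute)
qed

lemma avg_self: "finite U \<Longrightarrow> (\<Sum>j\<in>U. g j - avg U g) = 0"
proof -
  assume f: "finite U"
  show ?thesis
  proof (cases "U = {}")
    case True then show ?thesis by simp
  next
    case False
    then have c: "real (card U) > 0" using f by (simp add: card_gt_0_iff)
    have "(\<Sum>j\<in>U. g j - avg U g) = sum g U - real (card U) * avg U g"
      by (simp add: sum_subtractf)
    then show ?thesis using c unfolding avg_def by simp
  qed
qed

lemma SUP_le:
  assumes L2U: "L2 \<subseteq> U" and U: "finite U"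
    and H1: "\<forall>j\<in>U - L2. g j \<ge> avg U g"
    and H2: "\<forall>j\<in>X - U. g j \<le> avg U g"
    and X: "L2 \<subseteq> X" "finite X" "X \<noteq> {}"
  shows "avg X g \<le> avg U g"
proof -
  let ?v = "avg U g"
  let ?f = "\<lambda>j. g j - ?v"
  have s1: "sum ?f U = sum ?f (U - X \<inter> U) + sum ?f (X \<inter> U)"
    using U by (intro sum.subset_diff) auto
  have s2: "sum ?f X = sum ?f (X - X \<inter> U) + sum ?f (X \<inter> U)"
    using X by (intro sum.subset_diff) auto
  have "sum ?f (U - X \<inter> U) \<ge> 0"
    using H1 L2U X(1) by (intro sum_nonneg) auto
  moreover have "sum ?f (X - X \<inter> U) \<le> 0"
    using H2 by (intro sum_nonpos) auto
  moreover have "sum ?f U = 0" using avg_self[OF U] .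
  ultimately have "sum ?f X \<le> 0" using s1 s2 by linarith
  then show ?thesis using avg_le_iff[OF X(2,3)] by blast
qed

lemma avg_bound:
  assumes "finite S" "S \<noteq> {}" "\<forall>j\<in>S. g j \<le> c"
  shows "avg S g \<le> c"
  using avg_le_iff[OF assms(1,2)] assms(3) by (simp add: sum_nonpos)

lemma avg_nonneg:
  assumes "\<forall>j\<in>S. g j \<ge> 0"
  shows "avg S g \<ge> 0"
  using assms unfolding avg_def by (simp add: sum_nonneg)

lemma avg_single: "avg {k} g = g k" by (simp add: avg_def)


lemma avg_remove:
  assumes "finite U" "j \<in> U" "U - {j} \<noteq> {}" "g j \<le> avg U g"
  shows "avg U g \<le> avg (U - {j}) g"
proof -
  have f: "finite (U - {j})" using assms(1) by simp
  have "0 \<le> (\<Sum>i\<in>U. g i - avg U g) - (g j - avg U g)"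
    using avg_self[OF assms(1), of g] assms(4) by simp
  also have "\<dots> = (\<Sum>i\<in>U - {j}. g i - avg U g)"
    using assms(1,2) by (simp add: sum_diff1)
  finally show ?thesis using avg_ge_iff[OF f assms(3)] by blast
qed

lemma avg_insert:
  assumes "finite U" "U \<noteq> {}" "k \<notin> U" "avg (insert k U) g \<le> avg U g"
  shows "g k \<le> avg U g"
proof -
  have "(\<Sum>i\<in>insert k U. g i - avg U g) \<le> 0"
    using avg_le_iff[of "insert k U" g "avg U g"] assms by simp
  then have "(g k - avg U g) + (\<Sum>i\<in>U. g i - avg U g) \<le> 0"
    using assms by simp
  then show ?thesis using avg_self[OF assms(1), of g] by simp
qed

lemma exists_U:
  fixes g h :: "nat \<Rightarrow> real"
  assumes "n \<ge> 1"
  shows "\<exists>U. U \<noteq> {} \<and> U \<subseteq> {..<n} \<and>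
     (\<forall>j<n. j \<notin> U \<longrightarrow> g j < avg U g \<and> h j < avg U h) \<and>
     (\<forall>j\<in>U. avg U g \<le> g j \<or> avg U h \<le> h j)"
proof -
  define P where "P U \<longleftrightarrow> U \<noteq> {} \<and> U \<subseteq> {..<n} \<and>
     (\<forall>j<n. j \<notin> U \<longrightarrow> g j < avg U g \<and> h j < avg U h)" for U
  have "P {..<n}" using assms unfolding P_def by (auto simp: lessThan_empty_iff)
  then obtain U where PU: "P U" and minU: "\<And>V. P V \<Longrightarrow> card U \<le> card V"
    using ex_has_least_nat[of P "{..<n}" card] by blast
  have fin: "finite U" using PU unfolding P_def using finite_subset by blast
  have "\<forall>j\<in>U. avg U g \<le> g j \<or> avg U h \<le> h j"
  proof (rule ccontr)
    assume "\<not> ?thesis"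
    then obtain j where j: "j \<in> U" "g j < avg U g" "h j < avg U h" by force
    have ne: "U - {j} \<noteq> {}"
    proof
      assume "U - {j} = {}"
      then have "U = {j}" using j(1) by auto
      then show False using j(2) by (simp add: avg_single)
    qed
    have m1: "avg U g \<le> avg (U - {j}) g" using avg_remove[OF fin j(1) ne] j(2) by simp
    have m2: "avg U h \<le> avg (U - {j}) h" using avg_remove[OF fin j(1) ne] j(3) by simp
    have "\<forall>i<n. i \<notin> U - {j} \<longrightarrow> g i < avg (U - {j}) g \<and> h i < avg (U - {j}) h"
    proof (intro allI impI)
      fix i assume i: "i < n" "i \<notin> U - {j}"
      show "g i < avg (U - {j}) g \<and> h i < avg (U - {j}) h"
      proof (cases "i = j")
        case True then show ?thesis using j m1 m2 by simp
      next
        case False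
        then have "i \<notin> U" using i by simp
        then show ?thesis using PU i m1 m2 unfolding P_def by force
      qed
    qed
    moreover have "U - {j} \<subseteq> {..<n}" using PU unfolding P_def by auto
    ultimately have "P (U - {j})" using ne unfolding P_def by blast
    then have "card U \<le> card (U - {j})" by (rule minU)
    moreover have "card (U - {j}) < card U" using card_Diff1_less[OF fin j(1)] .
    ultimately show False by simp
  qed
  then show ?thesis using PU unfolding P_def by blast
qed

lemma BR1:
  assumes d: "0 < \<delta>" "\<delta> \<le> 1" and n: "n \<ge> 1"
    and L2U: "L2 \<subseteq> U" and U: "U \<subseteq> {..<n}" "U \<noteq> {}"
    and H1: "\<forall>j\<in>U - L2. avg U (\<lambda>k. fst (a k)) \<le> fst (a j)"
    and H2: "\<forall>j<n. j \<notin> U \<longrightarrow> fst (a j) \<le> avg U (\<lambda>k. fst (a k))"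
    and H3: "\<forall>j\<in>L2. fst (a j) \<le> c"
    and P1: "avg U (\<lambda>k. fst (a k)) \<le> P"
    and P2: "(1 - \<delta>) * c + \<delta> * avg U (\<lambda>k. fst (a k)) \<le> P"
    and T: "T \<subseteq> {..<n}"
  shows "payoff1 (SA_f \<delta>) n a T L2 \<le> P"
proof -
  let ?g = "\<lambda>k. fst (a k)"
  let ?v = "avg U ?g"
  have finU: "finite U" using U(1) finite_subset by blast
  have L2n: "L2 \<subseteq> {..<n}" using L2U U by auto
  have SUP: "avg X ?g \<le> ?v" if "L2 \<subseteq> X" "X \<subseteq> {..<n}" "X \<noteq> {}" for X
  proof (rule SUP_le[OF L2U finU H1 _ that(1) _ that(3)])
    show "\<forall>j\<in>X - U. fst (a j) \<le> avg U (\<lambda>k. fst (a k))" using H2 that(2) by auto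
    show "finite X" using that(2) finite_subset by blast
  qed
  show ?thesis
  proof (cases "T = {} \<and> L2 = {}")
    case True
    then have "payoff1 (SA_f \<delta>) n a T L2 = avg {..<n} ?g" using pay1[OF T L2n] by simp
    also have "\<dots> \<le> ?v" using SUP[of "{..<n}"] n L2n by (auto simp: lessThan_empty_iff)
    finally show ?thesis using P1 by linarith
  next
    case F: False
    show ?thesis
    proof (cases "T \<inter> L2 = {}")
      case True
      then have "payoff1 (SA_f \<delta>) n a T L2 = avg (T \<union> L2) ?g" using pay1[OF T L2n] F by simp
      also have "\<dots> \<le> ?v" using SUP[of "T \<union> L2"] F T L2n by auto
      finally show ?thesis using P1 by linarith
    next
      case False
      then have eq: "payoff1 (SA_f \<delta>) n a T L2 = (1 - \<delta>) * avg (T \<inter> L2) ?g + \<delta> * avg (T \<union> L2) ?g"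
        using pay1[OF T L2n] F by simp
      have "avg (T \<union> L2) ?g \<le> ?v" using SUP[of "T \<union> L2"] F T L2n by auto
      moreover have "avg (T \<inter> L2) ?g \<le> c"
      proof -
        have "T \<inter> L2 \<subseteq> {..<n}" using T by auto
        then have fI: "finite (T \<inter> L2)" by (rule finite_subset) simp
        show ?thesis using H3 by (intro avg_bound[OF fI False]) auto
      qed
      ultimately have "(1 - \<delta>) * avg (T \<inter> L2) ?g + \<delta> * avg (T \<union> L2) ?g \<le> (1 - \<delta>) * c + \<delta> * ?v"
        using d by (intro add_mono mult_left_mono) auto
      then show ?thesis using eq P2 by linarith
    qed
  qed
qed


lemma pay2:
  assumes "L1 \<subseteq> {..<n}" "L2 \<subseteq> {..<n}"
  shows "payoff2 (SA_f \<delta>) n a L1 L2 =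
    (if L1 = {} \<and> L2 = {} then avg {..<n} (\<lambda>k. snd (a k))
     else if L1 \<inter> L2 = {} then avg (L1 \<union> L2) (\<lambda>k. snd (a k))
     else (1 - \<delta>) * avg (L1 \<inter> L2) (\<lambda>k. snd (a k)) + \<delta> * avg (L1 \<union> L2) (\<lambda>k. snd (a k)))"
  using pay1[OF assms(2,1), of \<delta> "\<lambda>k. prod.swap (a k)"]
  by (simp add: pay2_swap Int_commute Un_commute conj_commute)

lemma BR2:
  assumes d: "0 < \<delta>" "\<delta> \<le> 1" and n: "n \<ge> 1"
    and L1U: "L1 \<subseteq> U" and U: "U \<subseteq> {..<n}" "U \<noteq> {}"
    and H1: "\<forall>j\<in>U - L1. avg U (\<lambda>k. snd (a k)) \<le> snd (a j)"
    and H2: "\<forall>j<n. j \<notin> U \<longrightarrow> snd (a j) \<le> avg U (\<lambda>k. snd (a k))"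
    and H3: "\<forall>j\<in>L1. snd (a j) \<le> c"
    and P1: "avg U (\<lambda>k. snd (a k)) \<le> P"
    and P2: "(1 - \<delta>) * c + \<delta> * avg U (\<lambda>k. snd (a k)) \<le> P"
    and T: "T \<subseteq> {..<n}"
  shows "payoff2 (SA_f \<delta>) n a L1 T \<le> P"
proof -
  have "payoff1 (SA_f \<delta>) n (\<lambda>k. prod.swap (a k)) T L1 \<le> P"
    by (rule BR1[OF d n L1U U]) (use H1 H2 H3 P1 P2 T in simp_all)
  then show ?thesis by (simp add: pay2_swap)
qed

lemma NE_exists:
  assumes d: "0 < \<delta>" "\<delta> \<le> 1" and n: "n \<ge> 1"
  shows "\<exists>L1 L2. pure_NE SA_Sig SA_Sig (SA_f \<delta>) n a L1 L2"
proof -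
  let ?g = "\<lambda>k. fst (a k)"
  let ?h = "\<lambda>k. snd (a k)"
  obtain U where U: "U \<noteq> {}" "U \<subseteq> {..<n}"
    and out: "\<forall>j<n. j \<notin> U \<longrightarrow> ?g j < avg U ?g \<and> ?h j < avg U ?h"
    and inU: "\<forall>j\<in>U. avg U ?g \<le> ?g j \<or> avg U ?h \<le> ?h j"
    using exists_U[OF n, of ?g ?h] by blast
  define v1 where "v1 = avg U ?g"
  define v2 where "v2 = avg U ?h"
  have out1: "\<forall>j<n. j \<notin> U \<longrightarrow> ?g j \<le> v1" using out unfolding v1_def by (auto intro: less_imp_le)
  have out2: "\<forall>j<n. j \<notin> U \<longrightarrow> ?h j \<le> v2" using out unfolding v2_def by (auto intro: less_imp_le)
  have NEI: "pure_NE SA_Sig SA_Sig (SA_f \<delta>) n a L1 L2"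
    if L: "L1 \<subseteq> U" "L2 \<subseteq> U"
      and B1: "\<And>T. T \<subseteq> {..<n} \<Longrightarrow> payoff1 (SA_f \<delta>) n a T L2 \<le> payoff1 (SA_f \<delta>) n a L1 L2"
      and B2: "\<And>T. T \<subseteq> {..<n} \<Longrightarrow> payoff2 (SA_f \<delta>) n a L1 T \<le> payoff2 (SA_f \<delta>) n a L1 L2"
    for L1 L2
    unfolding pure_NE_def SA_Sig_def using L U B1 B2 by auto
  show ?thesis
  proof (cases "\<exists>k\<in>U. v1 < ?g k \<and> v2 < ?h k")
    case False
    define L1 where "L1 = {j\<in>U. v1 \<le> ?g j \<and> ?h j \<le> v2}"
    define L2 where "L2 = U - L1"
    have sub1: "L1 \<subseteq> U" and sub2: "L2 \<subseteq> U" unfolding L1_def L2_def by auto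
    have disj: "L1 \<inter> L2 = {}" and un: "L1 \<union> L2 = U" unfolding L1_def L2_def by auto
    have n1: "L1 \<subseteq> {..<n}" and n2: "L2 \<subseteq> {..<n}" using sub1 sub2 U by auto
    have ne: "\<not> (L1 = {} \<and> L2 = {})" using un U by auto
    have p1: "payoff1 (SA_f \<delta>) n a L1 L2 = v1"
      using pay1[OF n1 n2] disj un ne unfolding v1_def by simp
    have p2: "payoff2 (SA_f \<delta>) n a L1 L2 = v2"
      using pay2[OF n1 n2] disj un ne unfolding v2_def by simp
    have B1: "payoff1 (SA_f \<delta>) n a T L2 \<le> payoff1 (SA_f \<delta>) n a L1 L2" if T: "T \<subseteq> {..<n}" for T
      proof -
      show "payoff1 (SA_f \<delta>) n a T L2 \<le> payoff1 (SA_f \<delta>) n a L1 L2"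
        unfolding p1
      proof (rule BR1[OF d n sub2 U(2) U(1) _ _ _ _ _ T, where c = v1])
        show "\<forall>j\<in>U - L2. avg U ?g \<le> ?g j" unfolding L2_def L1_def v1_def by auto
        show "\<forall>j<n. j \<notin> U \<longrightarrow> ?g j \<le> avg U ?g" using out1 unfolding v1_def .
        show "\<forall>j\<in>L2. ?g j \<le> v1"
        proof
          fix j assume j: "j \<in> L2"
          then have "j \<in> U" "\<not> (v1 \<le> ?g j \<and> ?h j \<le> v2)" unfolding L2_def L1_def by auto
          then show "?g j \<le> v1" using False by force
        qed
        show "avg U ?g \<le> v1" unfolding v1_def by simp
        show "(1 - \<delta>) * v1 + \<delta> * avg U ?g \<le> v1" unfolding v1_def by (simp add: algebra_simps)
      qed
    qed
    have B2: "payoff2 (SA_f \<delta>) n a L1 T \<le> payoff2 (SA_f \<delta>) n a L1 L2" if T: "T \<subseteq> {..<n}" for T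
      proof -
      show "payoff2 (SA_f \<delta>) n a L1 T \<le> payoff2 (SA_f \<delta>) n a L1 L2"
        unfolding p2
      proof (rule BR2[OF d n sub1 U(2) U(1) _ _ _ _ _ T, where c = v2])
        show "\<forall>j\<in>U - L1. avg U ?h \<le> ?h j"
        proof
          fix j assume j: "j \<in> U - L1"
          then have "j \<in> U" "\<not> (v1 \<le> ?g j \<and> ?h j \<le> v2)" unfolding L1_def by auto
          then show "avg U ?h \<le> ?h j" using inU unfolding v1_def v2_def by force
        qed
        show "\<forall>j<n. j \<notin> U \<longrightarrow> ?h j \<le> avg U ?h" using out2 unfolding v2_def .
        show "\<forall>j\<in>L1. ?h j \<le> v2" unfolding L1_def by auto
        show "avg U ?h \<le> v2" unfolding v2_def by simp
        show "(1 - \<delta>) * v2 + \<delta> * avg U ?h \<le> v2" unfolding v2_def by (simp add: algebra_simps)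
      qed
    qed
    show ?thesis using NEI[OF sub1 sub2 B1 B2] by blast
  next
    case True
    define TT where "TT = {j\<in>U. v1 < ?g j \<and> v2 < ?h j}"
    have "TT \<subseteq> {..<n}" using U(2) unfolding TT_def by auto
    then have finTT: "finite TT" by (rule finite_subset) simp
    have neTT: "TT \<noteq> {}" using True unfolding TT_def by auto
    define m where "m = Max ((\<lambda>j. ?g j + ?h j) ` TT)"
    have "m \<in> (\<lambda>j. ?g j + ?h j) ` TT" unfolding m_def using finTT neTT by (intro Max_in) auto
    then obtain k where kT: "k \<in> TT" and km: "m = ?g k + ?h k" by auto
    have kmax: "\<And>j. j \<in> TT \<Longrightarrow> ?g j + ?h j \<le> ?g k + ?h k"
      unfolding km[symmetric] m_def using finTT by (intro Max_ge) auto
    have kU: "k \<in> U" and gk: "v1 < ?g k" and hk: "v2 < ?h k" using kT unfolding TT_def by auto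
    define L1 where "L1 = {j\<in>U. v1 \<le> ?g j \<and> ?h j \<le> ?h k}"
    define L2 where "L2 = insert k (U - L1)"
    have kL1: "k \<in> L1" unfolding L1_def using kU gk by auto
    have sub1: "L1 \<subseteq> U" and sub2: "L2 \<subseteq> U" unfolding L1_def L2_def using kU by auto
    have int: "L1 \<inter> L2 = {k}" unfolding L2_def using kL1 by auto
    have un: "L1 \<union> L2 = U" unfolding L2_def using sub1 kL1 by auto
    have n1: "L1 \<subseteq> {..<n}" and n2: "L2 \<subseteq> {..<n}" using sub1 sub2 U by auto
    have ne: "\<not> (L1 = {} \<and> L2 = {})" using kL1 by auto
    define P1 where "P1 = (1 - \<delta>) * ?g k + \<delta> * v1"
    define P2 where "P2 = (1 - \<delta>) * ?h k + \<delta> * v2"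
    have p1: "payoff1 (SA_f \<delta>) n a L1 L2 = P1"
      using pay1[OF n1 n2] int un ne unfolding v1_def P1_def by (simp add: avg_single)
    have p2: "payoff2 (SA_f \<delta>) n a L1 L2 = P2"
      using pay2[OF n1 n2] int un ne unfolding v2_def P2_def by (simp add: avg_single)
    have dd: "0 \<le> 1 - \<delta>" using d by simp
    have "(1 - \<delta>) * v1 \<le> (1 - \<delta>) * ?g k" using dd gk by (intro mult_left_mono) auto
    then have P1v: "v1 \<le> P1" unfolding P1_def by (simp add: algebra_simps)
    have "(1 - \<delta>) * v2 \<le> (1 - \<delta>) * ?h k" using dd hk by (intro mult_left_mono) auto
    then have P2v: "v2 \<le> P2" unfolding P2_def by (simp add: algebra_simps)
    have B1: "payoff1 (SA_f \<delta>) n a T L2 \<le> payoff1 (SA_f \<delta>) n a L1 L2" if T: "T \<subseteq> {..<n}" for T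
      proof -
      show "payoff1 (SA_f \<delta>) n a T L2 \<le> payoff1 (SA_f \<delta>) n a L1 L2"
        unfolding p1
      proof (rule BR1[OF d n sub2 U(2) U(1) _ _ _ _ _ T, where c = "?g k"])
        show "\<forall>j\<in>U - L2. avg U ?g \<le> ?g j" unfolding L2_def L1_def v1_def by auto
        show "\<forall>j<n. j \<notin> U \<longrightarrow> ?g j \<le> avg U ?g" using out1 unfolding v1_def .
        show "\<forall>j\<in>L2. ?g j \<le> ?g k"
        proof
          fix j assume j: "j \<in> L2"
          show "?g j \<le> ?g k"
          proof (cases "j = k")
            case True then show ?thesis by simp
          next
            case False
            then have jU: "j \<in> U" and nj: "\<not> (v1 \<le> ?g j \<and> ?h j \<le> ?h k)"
              using j unfolding L2_def L1_def by auto
            show ?thesis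
            proof (rule ccontr)
              assume c: "\<not> ?g j \<le> ?g k"
              then have "?h k < ?h j" using nj gk by auto
              then have "j \<in> TT" unfolding TT_def using jU c gk hk by auto
              from kmax[OF this] c \<open>?h k < ?h j\<close> show False by simp
            qed
          qed
        qed
        show "avg U ?g \<le> P1" using P1v unfolding v1_def .
        show "(1 - \<delta>) * ?g k + \<delta> * avg U ?g \<le> P1" unfolding P1_def v1_def by simp
      qed
    qed
    have B2: "payoff2 (SA_f \<delta>) n a L1 T \<le> payoff2 (SA_f \<delta>) n a L1 L2" if T: "T \<subseteq> {..<n}" for T
      proof -
      show "payoff2 (SA_f \<delta>) n a L1 T \<le> payoff2 (SA_f \<delta>) n a L1 L2"
        unfolding p2
      proof (rule BR2[OF d n sub1 U(2) U(1) _ _ _ _ _ T, where c = "?h k"])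
        show "\<forall>j\<in>U - L1. avg U ?h \<le> ?h j"
        proof
          fix j assume j: "j \<in> U - L1"
          then have jU: "j \<in> U" and nj: "\<not> (v1 \<le> ?g j \<and> ?h j \<le> ?h k)" unfolding L1_def by auto
          show "avg U ?h \<le> ?h j"
          proof (cases "v1 \<le> ?g j")
            case True then show ?thesis using nj hk unfolding v2_def by auto
          next
            case False then show ?thesis using inU jU unfolding v1_def by force
          qed
        qed
        show "\<forall>j<n. j \<notin> U \<longrightarrow> ?h j \<le> avg U ?h" using out2 unfolding v2_def .
        show "\<forall>j\<in>L1. ?h j \<le> ?h k" unfolding L1_def by auto
        show "avg U ?h \<le> P2" using P2v unfolding v2_def .
        show "(1 - \<delta>) * ?h k + \<delta> * avg U ?h \<le> P2" unfolding P2_def v2_def by simp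
      qed
    qed
    show ?thesis using NEI[OF sub1 sub2 B1 B2] by blast
  qed
qed


lemma UN_nonneg: "0 \<le> UN_dist S k" by (simp add: UN_dist_def)

lemma UN_zero: "S \<subseteq> {..<n} \<Longrightarrow> n \<le> k \<Longrightarrow> UN_dist S k = 0"
  unfolding UN_dist_def by auto

lemma dist_SA:
  assumes d: "0 < \<delta>" "\<delta> \<le> 1" and n: "n \<ge> 1"
    and L: "L1 \<subseteq> {..<n}" "L2 \<subseteq> {..<n}"
  shows "is_distribution n (SA_f \<delta> n L1 L2)"
proof -
  have u: "L1 \<union> L2 \<subseteq> {..<n}" and i: "L1 \<inter> L2 \<subseteq> {..<n}" using L by auto
  have N: "{..<n} \<noteq> {}" using n by (auto simp: lessThan_empty_iff)
  show ?thesis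
  proof (cases "L1 = {} \<and> L2 = {}")
    case True
    show ?thesis unfolding is_distribution_def SA_f_def if_P[OF True]
      using UN_sum1[OF _ N] UN_nonneg UN_zero[of "{..<n}" n] by auto
  next
    case F: False
    show ?thesis
    proof (cases "L1 \<inter> L2 = {}")
      case True
      have ne: "L1 \<union> L2 \<noteq> {}" using F by auto
      show ?thesis unfolding is_distribution_def SA_f_def if_not_P[OF F] if_P[OF True]
        using UN_sum1[OF u ne] UN_nonneg UN_zero[OF u] by auto
    next
      case False
      have ne: "L1 \<union> L2 \<noteq> {}" using F by auto
      have s: "(\<Sum>k<n. (1 - \<delta>) * UN_dist (L1 \<inter> L2) k + \<delta> * UN_dist (L1 \<union> L2) k)
          = (1 - \<delta>) * (\<Sum>k<n. UN_dist (L1 \<inter> L2) k) + \<delta> * (\<Sum>k<n. UN_dist (L1 \<union> L2) k)"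
        by (simp add: sum.distrib sum_distrib_left)
      have dd: "0 \<le> 1 - \<delta>" using d by simp
      show ?thesis unfolding is_distribution_def SA_f_def if_not_P[OF F] if_not_P[OF False]
        using s UN_sum1[OF u ne] UN_sum1[OF i False] UN_nonneg UN_zero[OF u] UN_zero[OF i] d dd
        by (auto intro!: add_nonneg_nonneg mult_nonneg_nonneg)
    qed
  qed
qed

lemma PE1:
  assumes d: "0 < \<delta>" "\<delta> \<le> 1" and n: "n \<ge> 1"
    and coll: "is_collection n a"
    and NE: "pure_NE SA_Sig SA_Sig (SA_f \<delta>) n a L1 L2"
    and k: "k < n" and kc: "k \<in> L2 \<or> k \<notin> L1"
    and big: "payoff1 (SA_f \<delta>) n a L1 L2 + \<delta> < fst (a k)"
  shows False
proof -
  let ?g = "\<lambda>k. fst (a k)"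
  let ?x = "payoff1 (SA_f \<delta>) n a L1 L2"
  have L: "L1 \<subseteq> {..<n}" "L2 \<subseteq> {..<n}" using NE unfolding pure_NE_def SA_Sig_def by auto
  have br: "\<And>T. T \<subseteq> {..<n} \<Longrightarrow> payoff1 (SA_f \<delta>) n a T L2 \<le> ?x"
    using NE unfolding pure_NE_def SA_Sig_def by auto
  have g01: "0 \<le> ?g k" "?g k \<le> 1" using coll k unfolding is_collection_def by auto
  have kn: "{k} \<subseteq> {..<n}" using k by auto
  show False
  proof (cases "k \<in> L2")
    case True
    have e: "{k} \<inter> L2 = {k}" "{k} \<union> L2 = L2" using True by auto
    have p: "payoff1 (SA_f \<delta>) n a {k} L2 = (1 - \<delta>) * ?g k + \<delta> * avg L2 ?g"
      using pay1[OF kn L(2), of \<delta> a] e by (simp add: avg_single)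
    have "avg L2 ?g \<ge> 0" using coll L(2) unfolding is_collection_def by (intro avg_nonneg) auto
    then have "\<delta> * avg L2 ?g \<ge> 0" using d by simp
    moreover have "\<delta> * ?g k \<le> \<delta>" using d g01 by (simp add: mult_left_le)
    moreover have "(1 - \<delta>) * ?g k = ?g k - \<delta> * ?g k" by (simp add: algebra_simps)
    ultimately have "payoff1 (SA_f \<delta>) n a {k} L2 > ?x" using p big by linarith
    then show False using br[OF kn] by linarith
  next
    case False
    then have k1: "k \<notin> L1" and k2: "k \<notin> L2" using kc by auto
    show False
    proof (cases "L1 = {} \<and> L2 = {}")
      case True
      have "payoff1 (SA_f \<delta>) n a {k} L2 = ?g k"
        using pay1[OF kn L(2), of \<delta> a] True by (simp add: avg_single)
      then show False using br[OF kn] big d by linarith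
    next
      case F: False
      let ?U = "L1 \<union> L2"
      have "?U \<subseteq> {..<n}" using L by auto
      then have finU: "finite ?U" by (rule finite_subset) simp
      have neU: "?U \<noteq> {}" using F by auto
      have kU: "k \<notin> ?U" using k1 k2 by auto
      have D: "L1 - L2 \<subseteq> {..<n}" using L by auto
      have "payoff1 (SA_f \<delta>) n a (L1 - L2) L2 = avg ?U ?g"
      proof -
        have ne: "\<not> (L1 - L2 = {} \<and> L2 = {})" using F by auto
        have dj: "(L1 - L2) \<inter> L2 = {}" and un: "(L1 - L2) \<union> L2 = ?U" by auto
        show ?thesis unfolding pay1[OF D L(2), of \<delta> a] if_not_P[OF ne] if_P[OF dj] un ..
      qed
      then have A: "avg ?U ?g \<le> ?x" using br[OF D] by simp
      have I: "insert k L1 \<subseteq> {..<n}" using L k by auto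
      have eI: "insert k L1 \<inter> L2 = L1 \<inter> L2" "insert k L1 \<union> L2 = insert k ?U" using k2 by auto
      have B: "payoff1 (SA_f \<delta>) n a (insert k L1) L2 \<le> ?x" using br[OF I] .
      have "avg (insert k ?U) ?g \<le> avg ?U ?g"
      proof (cases "L1 \<inter> L2 = {}")
        case True
        have "payoff1 (SA_f \<delta>) n a (insert k L1) L2 = avg (insert k ?U) ?g"
          using pay1[OF I L(2), of \<delta> a] eI True by simp
        moreover have "?x = avg ?U ?g" using pay1[OF L, of \<delta> a] True F by simp
        ultimately show ?thesis using B by simp
      next
        case False
        have "payoff1 (SA_f \<delta>) n a (insert k L1) L2 = (1 - \<delta>) * avg (L1 \<inter> L2) ?g + \<delta> * avg (insert k ?U) ?g"
          using pay1[OF I L(2), of \<delta> a] eI False by simp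
        moreover have "?x = (1 - \<delta>) * avg (L1 \<inter> L2) ?g + \<delta> * avg ?U ?g" using pay1[OF L, of \<delta> a] False F by simp
        ultimately have "\<delta> * avg (insert k ?U) ?g \<le> \<delta> * avg ?U ?g" using B by simp
        then show ?thesis using d by simp
      qed
      then have "?g k \<le> avg ?U ?g" by (rule avg_insert[OF finU neU kU])
      then show False using A big d by linarith
    qed
  qed
qed

theorem corollary2:
  fixes \<delta> :: real
  assumes "0 < \<delta>" and "\<delta> \<le> 1"
  shows "is_mechanism SA_Sig SA_Sig (SA_f \<delta>)
       \<and> (\<forall>n \<ge> 1. \<forall>a. is_collection n a \<longrightarrow>
              (\<exists>L1 L2. pure_NE SA_Sig SA_Sig (SA_f \<delta>) n a L1 L2))
       \<and> anonymous SA_Sig SA_Sig (SA_f \<delta>)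
       \<and> (\<forall>n \<ge> 1. \<forall>a. is_collection n a \<longrightarrow>
              (\<forall>L1 L2. pure_NE SA_Sig SA_Sig (SA_f \<delta>) n a L1 L2 \<longrightarrow>
                 eps_pareto_efficient \<delta> n a (outcome (SA_f \<delta>) n a L1 L2)))"
proof (intro conjI)
  show "is_mechanism SA_Sig SA_Sig (SA_f \<delta>)"
    unfolding is_mechanism_def SA_Sig_def using dist_SA[OF assms] by auto
  show "\<forall>n \<ge> 1. \<forall>a. is_collection n a \<longrightarrow> (\<exists>L1 L2. pure_NE SA_Sig SA_Sig (SA_f \<delta>) n a L1 L2)"
    using NE_exists[OF assms] by blast
  show "anonymous SA_Sig SA_Sig (SA_f \<delta>)"
    unfolding anonymous_def using SA_f_sym by metis
  show "\<forall>n \<ge> 1. \<forall>a. is_collection n a \<longrightarrow>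
              (\<forall>L1 L2. pure_NE SA_Sig SA_Sig (SA_f \<delta>) n a L1 L2 \<longrightarrow>
                 eps_pareto_efficient \<delta> n a (outcome (SA_f \<delta>) n a L1 L2))"
  proof (intro allI impI)
    fix n a L1 L2
    assume n: "1 \<le> n" and coll: "is_collection n a" and NE: "pure_NE SA_Sig SA_Sig (SA_f \<delta>) n a L1 L2"
    show "eps_pareto_efficient \<delta> n a (outcome (SA_f \<delta>) n a L1 L2)"
      unfolding eps_pareto_efficient_def outcome_def
    proof
      assume "\<exists>k<n. fst (payoff1 (SA_f \<delta>) n a L1 L2, payoff2 (SA_f \<delta>) n a L1 L2) + \<delta> < fst (a k) \<and>
               snd (payoff1 (SA_f \<delta>) n a L1 L2, payoff2 (SA_f \<delta>) n a L1 L2) + \<delta> < snd (a k)"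
      then obtain k where k: "k < n" and b1: "payoff1 (SA_f \<delta>) n a L1 L2 + \<delta> < fst (a k)"
        and b2: "payoff2 (SA_f \<delta>) n a L1 L2 + \<delta> < snd (a k)" by auto
      show False
      proof (cases "k \<in> L2 \<or> k \<notin> L1")
        case True
        then show False by (rule PE1[OF assms n coll NE k _ b1])
      next
        case False
        have coll': "is_collection n (\<lambda>k. prod.swap (a k))"
          using coll unfolding is_collection_def by auto
        have b2': "payoff1 (SA_f \<delta>) n (\<lambda>k. prod.swap (a k)) L2 L1 + \<delta> < fst (prod.swap (a k))"
          using b2 by (simp add: pay2_swap)
        have "k \<in> L1 \<or> k \<notin> L2" using False by auto
        then show False by (rule PE1[OF assms n coll' NE_swap[OF NE] k _ b2'])
      qed
    qed
  qed
qed

end
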